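(* Let $s\ge1$ be a fixed integer, let $K_n,P_n$ be positive integers with $s\le K_n\le P_n$ and $P_n=\Omega(n)$, and let $q_n$ be the edge probability of $G_s(n,K_n,P_n)$, i.e., the probability that two given vertices share at least $s$ items. (a) If there is a sequence $\gamma_n$ with $|\gamma_n|=O(\ln\ln n)$ and $\frac{1}{s!}\cdot\frac{K_n^{2s}}{P_n^{s}}=\frac{\ln n+\gamma_n}{n}$, then $q_n\sim\frac{1}{s!}\cdot\frac{K_n^{2s}}{P_n^{s}}$ and $\big|q_n-\frac{1}{s!}\cdot\frac{K_n^{2s}}{P_n^{s}}\big|=o\big(\frac1n\big)$. (b) If there is a sequence $\gamma_n$ with $|\gamma_n|=O(\ln\ln n)$ and $q_n=\frac{\ln n+\gamma_n}{n}$, then $q_n\sim\frac{1}{s!}\cdot\frac{K_n^{2s}}{P_n^{s}}$ and $\big|q_n-\frac{1}{s!}\cdot\frac{K_n^{2s}}{P_n^{s}}\big|=o\big(\frac1n\big)$.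
   Context: The uniform random $s$-intersection graph $G_s(n,K_n,P_n)$ has $n$ vertices; each vertex independently selects a set of $K_n$ distinct items uniformly at random from a pool of $P_n$ distinct items, and two vertices are adjacent iff their item sets share at least $s$ items. $f_n\sim g_n$ means $f_n/g_n\to1$ as $n\to\infty$. *)

theory Defs
  imports Complex_Main "HOL-Library.Landau_Symbols"
begin

text \<open>Edge probability of the uniform random s-intersection graph G_s(n,K,P):
  the probability that two vertices, each independently choosing a uniformly random
  K-subset of the item pool {0..<P}, share at least s items.\<close>
definition edge_prob :: "nat \<Rightarrow> nat \<Rightarrow> nat \<Rightarrow> real" where
  "edge_prob s K P =
     real (card {(A, B). A \<subseteq> {..<P} \<and> B \<subseteq> {..<P} \<and> card A = K \<and> card B = K
                          \<and> s \<le> card (A \<inter> B)})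
     / (real (card {A. A \<subseteq> {..<P} \<and> card A = K}))^2"

definition main_term :: "nat \<Rightarrow> nat \<Rightarrow> nat \<Rightarrow> real" where
  "main_term s K P = real K ^ (2 * s) / (fact s * real P ^ s)"

end

theory Submission
  imports Defs "HOL-Real_Asymp.Real_Asymp"
begin


definition GG :: "nat \<Rightarrow> nat \<Rightarrow> nat set \<Rightarrow> nat \<Rightarrow> nat set set" where
  "GG s P A b = {B. B \<subseteq> {..<P} \<and> card B = b \<and> s \<le> card (A \<inter> B)}"

lemma choose_Suc_mult: "(n choose Suc k) * Suc k = (n choose k) * (n - k)"
  by (metis binomial_absorb_comp binomial_absorption mult.commute)

lemma count_contain:
  assumes "T \<subseteq> {..<P}" "card T = t" "t \<le> b"
  shows "card {B. B \<subseteq> {..<P} \<and> card B = b \<and> T \<subseteq> B} = (P - t) choose (b - t)"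
proof -
  have fT: "finite T" using assms(1) finite_subset by blast
  have "bij_betw (\<lambda>B. B - T) {B. B \<subseteq> {..<P} \<and> card B = b \<and> T \<subseteq> B}
          {C. C \<subseteq> {..<P} - T \<and> card C = b - t}"
  proof (rule bij_betw_byWitness[where f' = "\<lambda>C. C \<union> T"])
    show "\<forall>a\<in>{B. B \<subseteq> {..<P} \<and> card B = b \<and> T \<subseteq> B}. a - T \<union> T = a" by auto
    show "\<forall>a\<in>{C. C \<subseteq> {..<P} - T \<and> card C = b - t}. a \<union> T - T = a" by auto
    show "(\<lambda>B. B - T) ` {B. B \<subseteq> {..<P} \<and> card B = b \<and> T \<subseteq> B} \<subseteq> {C. C \<subseteq> {..<P} - T \<and> card C = b - t}"
      using assms fT by (auto simp: card_Diff_subset)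
    show "(\<lambda>C. C \<union> T) ` {C. C \<subseteq> {..<P} - T \<and> card C = b - t} \<subseteq> {B. B \<subseteq> {..<P} \<and> card B = b \<and> T \<subseteq> B}"
    proof clarify
      fix C assume C: "C \<subseteq> {..<P} - T" "card C = b - t"
      have fC: "finite C" using C(1) finite_subset by blast
      have "card (C \<union> T) = card C + card T" using C fC fT by (intro card_Un_disjoint) auto
      thus "C \<union> T \<subseteq> {..<P} \<and> card (C \<union> T) = b \<and> T \<subseteq> C \<union> T" using C assms by auto
    qed
  qed
  hence "card {B. B \<subseteq> {..<P} \<and> card B = b \<and> T \<subseteq> B} = card {C. C \<subseteq> {..<P} - T \<and> card C = b - t}"
    by (rule bij_betw_same_card)
  also have "\<dots> = card ({..<P} - T) choose (b - t)" by (rule n_subsets) simp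
  also have "card ({..<P} - T) = P - t" using assms fT by (simp add: card_Diff_subset)
  finally show ?thesis .
qed

lemma count_exact:
  assumes "A \<subseteq> {..<P}" "card A = a" "T \<subseteq> A" "card T = t" "t \<le> b"
  shows "card {B. B \<subseteq> {..<P} \<and> card B = b \<and> A \<inter> B = T} = (P - a) choose (b - t)"
proof -
  have fA: "finite A" using assms(1) finite_subset by blast
  have fT: "finite T" using assms(3) fA finite_subset by blast
  have "bij_betw (\<lambda>B. B - T) {B. B \<subseteq> {..<P} \<and> card B = b \<and> A \<inter> B = T}
          {C. C \<subseteq> {..<P} - A \<and> card C = b - t}"
  proof (rule bij_betw_byWitness[where f' = "\<lambda>C. C \<union> T"])
    show "\<forall>a\<in>{B. B \<subseteq> {..<P} \<and> card B = b \<and> A \<inter> B = T}. a - T \<union> T = a" by auto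
    show "\<forall>a\<in>{C. C \<subseteq> {..<P} - A \<and> card C = b - t}. a \<union> T - T = a" using assms(3) by auto
    show "(\<lambda>B. B - T) ` {B. B \<subseteq> {..<P} \<and> card B = b \<and> A \<inter> B = T} \<subseteq> {C. C \<subseteq> {..<P} - A \<and> card C = b - t}"
    proof clarify
      fix B assume B: "B \<subseteq> {..<P}" "b = card B" "T = A \<inter> B"
      show "B - A \<inter> B \<subseteq> {..<P} - A \<and> card (B - A \<inter> B) = card B - t"
        using B assms(4) fT by (auto simp: card_Diff_subset)
    qed
    show "(\<lambda>C. C \<union> T) ` {C. C \<subseteq> {..<P} - A \<and> card C = b - t} \<subseteq> {B. B \<subseteq> {..<P} \<and> card B = b \<and> A \<inter> B = T}"
    proof clarify
      fix C assume C: "C \<subseteq> {..<P} - A" "card C = b - t"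
      have fC: "finite C" using C(1) finite_subset by blast
      have "card (C \<union> T) = card C + card T" using C fC fT assms(3) by (intro card_Un_disjoint) auto
      thus "C \<union> T \<subseteq> {..<P} \<and> card (C \<union> T) = b \<and> A \<inter> (C \<union> T) = T" using C assms by auto
    qed
  qed
  hence "card {B. B \<subseteq> {..<P} \<and> card B = b \<and> A \<inter> B = T} = card {C. C \<subseteq> {..<P} - A \<and> card C = b - t}"
    by (rule bij_betw_same_card)
  also have "\<dots> = card ({..<P} - A) choose (b - t)" by (rule n_subsets) simp
  also have "card ({..<P} - A) = P - a" using assms fA by (simp add: card_Diff_subset)
  finally show ?thesis .
qed

lemma GG_upper:
  assumes "A \<subseteq> {..<P}" "card A = a" "s \<le> b"
  shows "card (GG s P A b) \<le> (a choose s) * ((P - s) choose (b - s))"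
proof -
  define I where "I = {T. T \<subseteq> A \<and> card T = s}"
  have fA: "finite A" using assms(1) finite_subset by blast
  have "GG s P A b \<subseteq> (\<Union>T\<in>I. {B. B \<subseteq> {..<P} \<and> card B = b \<and> T \<subseteq> B})"
  proof
    fix B assume "B \<in> GG s P A b"
    hence B: "B \<subseteq> {..<P}" "card B = b" "s \<le> card (A \<inter> B)" by (auto simp: GG_def)
    obtain T where "T \<subseteq> A \<inter> B" "card T = s" using obtain_subset_with_card_n[OF B(3)] by metis
    thus "B \<in> (\<Union>T\<in>I. {B. B \<subseteq> {..<P} \<and> card B = b \<and> T \<subseteq> B})" using B by (auto simp: I_def)
  qed
  hence "card (GG s P A b) \<le> card (\<Union>T\<in>I. {B. B \<subseteq> {..<P} \<and> card B = b \<and> T \<subseteq> B})"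
    by (rule card_mono[rotated]) (auto intro: finite_subset[of _ "Pow {..<P}"])
  also have "\<dots> \<le> (\<Sum>T\<in>I. card {B. B \<subseteq> {..<P} \<and> card B = b \<and> T \<subseteq> B})"
    by (rule card_UN_le) (auto simp: I_def fA)
  also have "\<dots> = (\<Sum>T\<in>I. (P - s) choose (b - s))"
    by (rule sum.cong) (use assms in \<open>auto simp: I_def intro!: count_contain\<close>)
  also have "\<dots> = card I * ((P - s) choose (b - s))" by simp
  also have "card I = a choose s" unfolding I_def using n_subsets[OF fA] assms(2) by simp
  finally show ?thesis .
qed

lemma GG_lower:
  assumes "A \<subseteq> {..<P}" "card A = a" "s \<le> b"
  shows "(a choose s) * ((P - a) choose (b - s)) \<le> card (GG s P A b)"
proof -
  define I where "I = {T. T \<subseteq> A \<and> card T = s}"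
  have fA: "finite A" using assms(1) finite_subset by blast
  have "(\<Union>T\<in>I. {B. B \<subseteq> {..<P} \<and> card B = b \<and> A \<inter> B = T}) \<subseteq> GG s P A b"
    by (auto simp: I_def GG_def)
  hence "card (\<Union>T\<in>I. {B. B \<subseteq> {..<P} \<and> card B = b \<and> A \<inter> B = T}) \<le> card (GG s P A b)"
    by (rule card_mono[rotated]) (auto simp: GG_def intro: finite_subset[of _ "Pow {..<P}"])
  moreover have "card (\<Union>T\<in>I. {B. B \<subseteq> {..<P} \<and> card B = b \<and> A \<inter> B = T})
      = (\<Sum>T\<in>I. card {B. B \<subseteq> {..<P} \<and> card B = b \<and> A \<inter> B = T})"
    by (rule card_UN_disjoint) (auto simp: I_def fA intro: finite_subset[of _ "Pow {..<P}"])
  moreover have "\<dots> = (\<Sum>T\<in>I. (P - a) choose (b - s))"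
    by (rule sum.cong) (use assms in \<open>auto simp: I_def intro!: count_exact\<close>)
  moreover have "card I = a choose s" unfolding I_def using n_subsets[OF fA] assms(2) by simp
  ultimately show ?thesis by simp
qed




lemma finite_GG: "finite (GG s P A b)"
  unfolding GG_def by (rule finite_subset[of _ "Pow {..<P}"]) auto

lemma GG_step:
  assumes "b < P"
  shows "card (GG s P A b) * (P - b) \<le> card (GG s P A (Suc b)) * Suc b"
proof -
  define S1 where "S1 = Sigma (GG s P A b) (\<lambda>B. {..<P} - B)"
  define S2 where "S2 = Sigma (GG s P A (Suc b)) (\<lambda>B. B)"
  have "card S1 = (\<Sum>B\<in>GG s P A b. card ({..<P} - B))" unfolding S1_def
    by (rule card_SigmaI) (auto simp: finite_GG)
  also have "\<dots> = (\<Sum>B\<in>GG s P A b. P - b)"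
    by (rule sum.cong) (auto simp: GG_def card_Diff_subset finite_subset)
  finally have c1: "card S1 = card (GG s P A b) * (P - b)" by simp
  have "card S2 = (\<Sum>B\<in>GG s P A (Suc b). card B)" unfolding S2_def
    by (rule card_SigmaI) (auto simp: finite_GG GG_def finite_subset)
  also have "\<dots> = (\<Sum>B\<in>GG s P A (Suc b). Suc b)"
    by (rule sum.cong) (auto simp: GG_def)
  finally have c2: "card S2 = card (GG s P A (Suc b)) * Suc b" by simp
  have fS2: "finite S2" unfolding S2_def
    by (rule finite_SigmaI) (auto simp: finite_GG GG_def finite_subset)
  have inj: "inj_on (\<lambda>(B, x). (insert x B, x)) S1"
    unfolding S1_def by (auto simp: inj_on_def) (metis Diff_insert_absorb)+
  have img: "(\<lambda>(B, x). (insert x B, x)) ` S1 \<subseteq> S2"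
  proof clarify
    fix B x assume "(B, x) \<in> S1"
    hence B: "B \<subseteq> {..<P}" "card B = b" "s \<le> card (A \<inter> B)" "x < P" "x \<notin> B"
      by (auto simp: S1_def GG_def)
    have fB: "finite B" using B(1) finite_subset by blast
    have "card (A \<inter> B) \<le> card (A \<inter> insert x B)" by (rule card_mono) (use fB in auto)
    thus "(insert x B, x) \<in> S2" using B fB by (auto simp: S2_def GG_def)
  qed
  have "card S1 \<le> card S2" using card_inj_on_le[OF inj img fS2] .
  thus ?thesis using c1 c2 by simp
qed

lemma GG_ratio_mono:
  assumes "b \<le> b'" "b' \<le> P"
  shows "real (card (GG s P A b)) / real (P choose b) \<le> real (card (GG s P A b')) / real (P choose b')"
  using assms
proof (induction b' rule: dec_induct)
  case base thus ?case by simp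
next
  case (step m)
  have mP: "m < P" using step by simp
  have pos: "0 < real (P choose m)" "0 < real (P choose Suc m)" using mP by auto
  have e1: "real (P choose Suc m) * real (Suc m) = real (P choose m) * real (P - m)"
    using choose_Suc_mult[of P m] by (metis of_nat_mult)
  have e2: "real (card (GG s P A m)) * real (P - m) \<le> real (card (GG s P A (Suc m))) * real (Suc m)"
    using GG_step[OF mP, of s A] by (metis of_nat_le_iff of_nat_mult)
  have "real (card (GG s P A m)) / real (P choose m) \<le> real (card (GG s P A (Suc m))) / real (P choose Suc m)"
  proof -
    have "real (card (GG s P A m)) / real (P choose m)
        = real (card (GG s P A m)) * real (P - m) / (real (P choose m) * real (P - m))"
      using mP by simp
    also have "\<dots> \<le> real (card (GG s P A (Suc m))) * real (Suc m) / (real (P choose m) * real (P - m))"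
      by (rule divide_right_mono[OF e2]) simp
    also have "\<dots> = real (card (GG s P A (Suc m))) * real (Suc m) / (real (P choose Suc m) * real (Suc m))"
      by (simp only: e1)
    also have "\<dots> = real (card (GG s P A (Suc m))) / real (P choose Suc m)"
      by simp
    finally show ?thesis .
  qed
  thus ?case using step by linarith
qed

lemma edge_prob_sum:
  "edge_prob s K P = (\<Sum>A\<in>{A. A \<subseteq> {..<P} \<and> card A = K}. real (card (GG s P A K)))
                     / (real (P choose K))^2"
proof -
  have "{(A, B). A \<subseteq> {..<P} \<and> B \<subseteq> {..<P} \<and> card A = K \<and> card B = K \<and> s \<le> card (A \<inter> B)}
        = Sigma {A. A \<subseteq> {..<P} \<and> card A = K} (\<lambda>A. GG s P A K)"
    by (auto simp: GG_def)
  moreover have "card (Sigma {A. A \<subseteq> {..<P} \<and> card A = K} (\<lambda>A. GG s P A K))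
     = (\<Sum>A\<in>{A. A \<subseteq> {..<P} \<and> card A = K}. card (GG s P A K))"
    by (rule card_SigmaI) (auto simp: finite_GG intro: finite_subset[of _ "Pow {..<P}"])
  moreover have "card {A. A \<subseteq> {..<P} \<and> card A = K} = P choose K"
    using n_subsets[of "{..<P}" K] by simp
  ultimately show ?thesis unfolding edge_prob_def by simp
qed




lemma choose_ratio:
  fixes n d k :: nat
  assumes "k \<le> n"
  shows "m \<le> k \<Longrightarrow> real (n choose m) * (1 - real m * (real d / (real n - real k + 1))) \<le> real ((n - d) choose m)"
proof (induction m)
  case 0 thus ?case by simp
next
  case (Suc m)
  define r where "r = real d / (real n - real k + 1)"
  have den: "real n - real k + 1 > 0" using assms by simp
  have r0: "r \<ge> 0" unfolding r_def using den by simp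
  have IH: "real (n choose m) * (1 - real m * r) \<le> real ((n - d) choose m)" using Suc unfolding r_def by simp
  show ?case
  proof (cases "1 - real (Suc m) * r \<le> 0")
    case True
    hence "real (n choose Suc m) * (1 - real (Suc m) * r) \<le> 0" by (simp add: mult_nonneg_nonpos)
    thus ?thesis unfolding r_def[symmetric] by (meson of_nat_0_le_iff order_trans)
  next
    case False
    hence rl: "real (Suc m) * r < 1" by simp
    have rr: "real (Suc m) * r = real m * r + r" by (simp add: algebra_simps)
    have "real m * r \<ge> 0" using r0 by simp
    hence "r < 1" using rl rr by linarith
    hence "real d < real n - real k + 1" unfolding r_def using den by (simp add: divide_less_eq)
    hence dl: "d + m < n" using Suc.prems by linarith
    have e1: "real ((n - d) choose Suc m) * real (Suc m) = real ((n - d) choose m) * (real n - real d - real m)"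
    proof -
      have "real (n - d - m) = real n - real d - real m" using dl by (simp add: of_nat_diff)
      thus ?thesis using choose_Suc_mult[of "n - d" m] by (metis of_nat_mult)
    qed
    have e2: "real (n choose Suc m) * real (Suc m) = real (n choose m) * (real n - real m)"
    proof -
      have "real (n - m) = real n - real m" using dl by (simp add: of_nat_diff)
      thus ?thesis using choose_Suc_mult[of n m] by (metis of_nat_mult)
    qed
    have nm: "real n - real m \<ge> real n - real k + 1" using Suc.prems by simp
    have f: "real n - real d - real m \<ge> (real n - real m) * (1 - r)"
    proof -
      have "(real n - real m) * r \<ge> real d"
      proof -
        have "(real n - real m) * r \<ge> (real n - real k + 1) * r" using nm r0 by (simp add: mult_right_mono)
        also have "(real n - real k + 1) * r = real d" unfolding r_def using den by simp
        finally show ?thesis .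
      qed
      thus ?thesis by (simp add: algebra_simps)
    qed
    have mr: "1 - real m * r \<ge> 0" using rl rr r0 by linarith
    have "real (n choose Suc m) * (1 - real (Suc m) * r) * real (Suc m)
        = real (n choose m) * (real n - real m) * (1 - real (Suc m) * r)" by (subst e2[symmetric]) (simp only: mult_ac)
    also have "\<dots> \<le> real (n choose m) * (real n - real m) * ((1 - real m * r) * (1 - r))"
    proof (rule mult_left_mono)
      have "(1 - real m * r) * (1 - r) = 1 - real (Suc m) * r + real m * (r * r)" by (simp add: algebra_simps)
      moreover have "real m * (r * r) \<ge> 0" using r0 by simp
      ultimately show "1 - real (Suc m) * r \<le> (1 - real m * r) * (1 - r)" by linarith
      show "0 \<le> real (n choose m) * (real n - real m)" using dl by simp
    qed
    also have "\<dots> = (real (n choose m) * (1 - real m * r)) * ((real n - real m) * (1 - r))" by simp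
    also have "\<dots> \<le> real ((n - d) choose m) * (real n - real d - real m)"
      by (rule mult_mono[OF IH f]) (use mr r0 dl \<open>r < 1\<close> in simp_all)
    also have "\<dots> = real ((n - d) choose Suc m) * real (Suc m)" using e1 by simp
    finally have "real (n choose Suc m) * (1 - real (Suc m) * r) \<le> real ((n - d) choose Suc m)"
      by (simp del: of_nat_Suc)
    thus ?thesis unfolding r_def .
  qed
qed



definition ff :: "real \<Rightarrow> nat \<Rightarrow> real" where
  "ff x s = (\<Prod>i<s. x - real i)"

lemma ff_choose: "fact s * real (K choose s) = ff (real K) s"
proof (induction s)
  case 0 thus ?case by (simp add: ff_def)
next
  case (Suc s)
  have e: "real (K choose Suc s) * real (Suc s) = real (K choose s) * real (K - s)"
    using choose_Suc_mult[of K s] by (metis of_nat_mult)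
  have "fact (Suc s) * real (K choose Suc s) = fact s * (real (K choose Suc s) * real (Suc s))"
    by (simp add: algebra_simps)
  also have "\<dots> = fact s * real (K choose s) * real (K - s)" using e by simp
  also have "\<dots> = ff (real K) s * (real K - real s)"
  proof (cases "s \<le> K")
    case True thus ?thesis using Suc by (simp add: of_nat_diff)
  next
    case False
    have "ff (real K) s = 0" unfolding ff_def by (rule prod_zero) (use False in auto)
    thus ?thesis using False by simp
  qed
  also have "\<dots> = ff (real K) (Suc s)" by (simp add: ff_def)
  finally show ?case .
qed

lemma ff_le: "real s \<le> x \<Longrightarrow> ff x s \<le> x ^ s"
  unfolding ff_def by (rule order_trans[OF prod_mono[where g = "\<lambda>_. x"]]) auto

lemma ff_ge2: "real s \<le> x \<Longrightarrow> (x - real s) ^ s \<le> ff x s"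
  unfolding ff_def by (rule order_trans[OF _ prod_mono[where f = "\<lambda>_. x - real s"]]) auto

lemma ff_nonneg: "real s \<le> x \<Longrightarrow> 0 \<le> ff x s"
  unfolding ff_def by (rule prod_nonneg) auto

lemma ff_ge: "x > 0 \<Longrightarrow> real j \<le> x \<Longrightarrow> x ^ j * (1 - real j * (real j - 1) / x) \<le> ff x j"
proof (induction j)
  case 0 thus ?case by (simp add: ff_def)
next
  case (Suc j)
  have IH: "x ^ j * (1 - real j * (real j - 1) / x) \<le> ff x j" using Suc by simp
  have xj: "x - real j \<ge> 0" using Suc by simp
  have "x ^ Suc j * (1 - real (Suc j) * (real (Suc j) - 1) / x)
      \<le> x ^ j * (1 - real j * (real j - 1) / x) * (x - real j)"
  proof -
    have eqA: "x ^ j * (1 - real j * (real j - 1) / x) * (x - real j)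
        = x ^ Suc j * ((1 - real j * (real j - 1) / x) * (1 - real j / x))"
      using Suc.prems by (simp add: field_simps)
    have ineqB: "(1 - real j * (real j - 1) / x) * (1 - real j / x) \<ge> 1 - real (Suc j) * (real (Suc j) - 1) / x"
    proof -
      have "(1 - real j * (real j - 1) / x) * (1 - real j / x)
          = 1 - real j * real j / x + (real j * (real j - 1) / x) * (real j / x)"
        using Suc.prems by (simp add: field_simps)
      moreover have "real j * real j / x \<le> real (Suc j) * (real (Suc j) - 1) / x"
        using Suc.prems by (intro divide_right_mono) (auto simp: algebra_simps)
      moreover have "real j * (real j - 1) \<ge> 0"
      proof (cases "j = 0")
        case False hence "real j - 1 \<ge> 0" by simp
        thus ?thesis by simp
      qed simp
      hence "(real j * (real j - 1) / x) * (real j / x) \<ge> 0"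
        using Suc.prems by (metis divide_nonneg_pos mult_nonneg_nonneg of_nat_0_le_iff)
      ultimately show ?thesis by linarith
    qed
    have "x ^ Suc j \<ge> 0" using Suc.prems by simp
    from mult_left_mono[OF ineqB this] show ?thesis unfolding eqA .
  qed
  also have "\<dots> \<le> ff x j * (x - real j)" by (rule mult_right_mono[OF IH xj])
  also have "\<dots> = ff x (Suc j)" by (simp add: ff_def)
  finally show ?case .
qed




definition Uval :: "nat \<Rightarrow> nat \<Rightarrow> nat \<Rightarrow> real" where
  "Uval s K P = real (K choose s) ^ 2 / real (P choose s)"

lemma KS_card: "card {A. A \<subseteq> {..<P} \<and> card A = K} = P choose K"
  using n_subsets[of "{..<P}" K] by simp

lemma KS_finite: "finite {A. A \<subseteq> {..<P::nat} \<and> card A = K}"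
  by (rule finite_subset[of _ "Pow {..<P}"]) auto

lemma ratio_id:
  assumes "s \<le> K" "K \<le> P"
  shows "real ((P - s) choose (K - s)) / real (P choose K) = real (K choose s) / real (P choose s)"
proof -
  have "real (P choose K) * real (K choose s) = real (P choose s) * real ((P - s) choose (K - s))"
    using choose_mult[OF assms] by (metis of_nat_mult)
  moreover have "real (P choose K) > 0" "real (P choose s) > 0" using assms by auto
  ultimately show ?thesis by (simp add: field_simps)
qed

lemma EP_upper:
  assumes "s \<le> K" "K \<le> P"
  shows "edge_prob s K P \<le> Uval s K P"
proof -
  define N where "N = real (P choose K)"
  have Npos: "N > 0" using assms unfolding N_def by simp
  have "(\<Sum>A\<in>{A. A \<subseteq> {..<P} \<and> card A = K}. real (card (GG s P A K)))
     \<le> (\<Sum>A\<in>{A. A \<subseteq> {..<P} \<and> card A = K}. real ((K choose s) * ((P - s) choose (K - s))))"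
    by (rule sum_mono) (use GG_upper assms in \<open>auto simp del: of_nat_mult\<close>)
  also have "\<dots> = N * (real (K choose s) * real ((P - s) choose (K - s)))"
    by (simp add: KS_card N_def)
  finally have "edge_prob s K P \<le> N * (real (K choose s) * real ((P - s) choose (K - s))) / N ^ 2"
    unfolding edge_prob_sum N_def by (simp add: divide_right_mono)
  also have "\<dots> = real (K choose s) * (real ((P - s) choose (K - s)) / N)"
    using Npos by (simp add: power2_eq_square)
  also have "\<dots> = Uval s K P" unfolding N_def ratio_id[OF assms] Uval_def by (simp add: power2_eq_square)
  finally show ?thesis .
qed

lemma EP_lower:
  assumes "s \<le> a" "a \<le> K" "K \<le> P"
  shows "real (a choose s) ^ 2 / real (P choose s) * (1 - real a ^ 2 / (real P - real a + 1)) \<le> edge_prob s K P"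
proof -
  define V where "V = real (a choose s) ^ 2 / real (P choose s) * (1 - real a ^ 2 / (real P - real a + 1))"
  define N where "N = real (P choose K)"
  have Npos: "N > 0" using assms unfolding N_def by simp
  have Na: "real (P choose a) > 0" using assms by simp
  have key: "N * V \<le> real (card (GG s P A K))" if A: "A \<subseteq> {..<P}" "card A = K" for A
  proof -
    obtain A' where A': "A' \<subseteq> A" "card A' = a" "finite A'"
      using obtain_subset_with_card_n[of a A] A assms by auto
    have A'P: "A' \<subseteq> {..<P}" using A' A by auto
    have "real (a choose s) * real ((P - s) choose (a - s)) * (1 - real (a - s) * (real (a - s) / (real (P - s) - real (a - s) + 1)))
        \<le> real (a choose s) * real ((P - s - (a - s)) choose (a - s))"
    proof -
      have cr: "real ((P - s) choose (a - s)) * (1 - real (a - s) * (real (a - s) / (real (P - s) - real (a - s) + 1)))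
        \<le> real ((P - s - (a - s)) choose (a - s))"
        by (rule choose_ratio) (use assms in auto)
      show ?thesis using mult_left_mono[OF cr, of "real (a choose s)"] by (simp add: mult.assoc)
    qed
    also have "P - s - (a - s) = P - a" using assms by simp
    also have "real (a choose s) * real ((P - a) choose (a - s)) \<le> real (card (GG s P A' a))"
      using GG_lower[OF A'P A'(2) assms(1)] by (metis of_nat_le_iff of_nat_mult)
    also have "\<dots> \<le> real (card (GG s P A a))"
    proof -
      have "GG s P A' a \<subseteq> GG s P A a"
      proof
        fix B assume "B \<in> GG s P A' a"
        hence B: "B \<subseteq> {..<P}" "card B = a" "s \<le> card (A' \<inter> B)" by (auto simp: GG_def)
        have "finite (A \<inter> B)" using B(1) finite_subset by blast
        hence "card (A' \<inter> B) \<le> card (A \<inter> B)" by (rule card_mono) (use A' in auto)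
        thus "B \<in> GG s P A a" using B by (auto simp: GG_def)
      qed
      thus ?thesis by (simp add: card_mono finite_GG)
    qed
    finally have c1: "real (a choose s) * real ((P - s) choose (a - s)) * (1 - real (a - s) * (real (a - s) / (real (P - s) - real (a - s) + 1)))
        \<le> real (card (GG s P A a))" .
    have "real (P - s) - real (a - s) + 1 = real P - real a + 1" using assms by (simp add: of_nat_diff)
    hence c1': "real (a choose s) * real ((P - s) choose (a - s)) * (1 - real (a - s) ^ 2 / (real P - real a + 1))
        \<le> real (card (GG s P A a))" using c1 by (simp add: power2_eq_square)
    have den: "real P - real a + 1 > 0" using assms by simp
    have sq: "real (a - s) ^ 2 \<le> real a ^ 2" by (simp add: power_mono)
    have "1 - real a ^ 2 / (real P - real a + 1) \<le> 1 - real (a - s) ^ 2 / (real P - real a + 1)"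
      using sq den by (simp add: divide_right_mono)
    hence c2: "real (a choose s) * real ((P - s) choose (a - s)) * (1 - real a ^ 2 / (real P - real a + 1))
        \<le> real (card (GG s P A a))"
      using c1' by (smt (verit) mult_left_mono of_nat_0_le_iff mult_nonneg_nonneg)
    have "V = real (a choose s) * real ((P - s) choose (a - s)) * (1 - real a ^ 2 / (real P - real a + 1)) / real (P choose a)"
    proof -
      have r: "real ((P - s) choose (a - s)) / real (P choose a) = real (a choose s) / real (P choose s)"
        by (rule ratio_id) (use assms in auto)
      have "V = real (a choose s) * (real ((P - s) choose (a - s)) / real (P choose a)) * (1 - real a ^ 2 / (real P - real a + 1))"
        unfolding V_def r by (simp add: power2_eq_square)
      thus ?thesis by simp
    qed
    also have "\<dots> \<le> real (card (GG s P A a)) / real (P choose a)" using c2 Na by (simp add: divide_right_mono)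
    also have "\<dots> \<le> real (card (GG s P A K)) / real (P choose K)" by (rule GG_ratio_mono) (use assms in auto)
    finally show ?thesis unfolding N_def using Npos N_def by (simp add: field_simps)
  qed
  have "(\<Sum>A\<in>{A. A \<subseteq> {..<P} \<and> card A = K}. N * V) \<le> (\<Sum>A\<in>{A. A \<subseteq> {..<P} \<and> card A = K}. real (card (GG s P A K)))"
    by (rule sum_mono) (use key in auto)
  moreover have cN: "real (card {A. A \<subseteq> {..<P} \<and> card A = K}) = N" by (simp add: KS_card N_def)
  ultimately have "N * (N * V) \<le> (\<Sum>A\<in>{A. A \<subseteq> {..<P} \<and> card A = K}. real (card (GG s P A K)))"
    by (simp only: sum_constant cN)
  hence "N * N * V \<le> (\<Sum>A\<in>{A. A \<subseteq> {..<P} \<and> card A = K}. real (card (GG s P A K)))"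
    by (simp only: mult.assoc)
  hence "N * N * V / N ^ 2 \<le> edge_prob s K P" unfolding edge_prob_sum N_def[symmetric]
    by (rule divide_right_mono) simp
  thus ?thesis using Npos unfolding V_def by (simp add: power2_eq_square)
qed




lemma Uval_ff: "Uval s K P = ff (real K) s ^ 2 / (fact s * ff (real P) s)"
proof -
  have a: "real (K choose s) = ff (real K) s / fact s" using ff_choose[of s K] by (simp add: field_simps)
  have b: "real (P choose s) = ff (real P) s / fact s" using ff_choose[of s P] by (simp add: field_simps)
  show ?thesis unfolding Uval_def a b by (simp add: power2_eq_square field_simps)
qed

lemma main_alt: "main_term s K P = real K ^ s * real K ^ s / (fact s * real P ^ s)"
  unfolding main_term_def by (simp add: power_add[symmetric] mult_2)

lemma half_bound:
  fixes y z e :: real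
  assumes "y * (1 - e) \<le> z" "1/2 \<le> 1 - e" "0 \<le> y"
  shows "y / 2 \<le> z"
proof -
  have "y * (1/2) \<le> y * (1 - e)" by (rule mult_left_mono) (use assms in auto)
  thus ?thesis using assms(1) by simp
qed

lemma UM1:
  assumes "s \<le> K" "K \<le> P" "real s * (real s - 1) \<le> real P / 2" "0 < P"
  shows "Uval s K P \<le> 2 * main_term s K P"
proof -
  have Pp: "real P > 0" using assms by simp
  have fP: "ff (real P) s \<ge> real P ^ s / 2"
  proof -
    have "real P ^ s * (1 - real s * (real s - 1) / real P) \<le> ff (real P) s"
      by (rule ff_ge) (use assms in auto)
    moreover have "1 - real s * (real s - 1) / real P \<ge> 1/2" using assms Pp by (simp add: field_simps)
    moreover have "real P ^ s \<ge> 0" by simp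
    ultimately show ?thesis by (rule half_bound)
  qed
  have fK: "ff (real K) s \<le> real K ^ s" "0 \<le> ff (real K) s" using ff_le ff_nonneg assms by auto
  have Ps: "real P ^ s > 0" using Pp by simp
  have "Uval s K P \<le> (real K ^ s) ^ 2 / (fact s * (real P ^ s / 2))"
    unfolding Uval_ff
    by (rule frac_le) (use fK fP Ps in \<open>auto intro: power_mono mult_left_mono\<close>)
  also have "\<dots> = 2 * main_term s K P" unfolding main_alt by (simp add: power2_eq_square)
  finally show ?thesis .
qed



lemma UM2:
  assumes "s \<le> K" "K \<le> P" "real s * (real s - 1) \<le> real P / 2" "real s * (real s - 1) \<le> real K" "0 < K"
  shows "\<bar>Uval s K P - main_term s K P\<bar>
         \<le> 2 * (real s * (real s - 1)) * main_term s K P * (1 / real K + 1 / real P)"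
proof -
  define c where "c = real s * (real s - 1)"
  define M where "M = main_term s K P"
  have c0: "c \<ge> 0" unfolding c_def by (cases s) auto
  have Pp: "real P > 0" "real K > 0" using assms by auto
  have M0: "M \<ge> 0" unfolding M_def main_term_def by simp
  have fP: "ff (real P) s \<ge> real P ^ s * (1 - c / real P)"
    unfolding c_def by (rule ff_ge) (use assms in auto)
  have hP: "1 - c / real P \<ge> 1/2" using assms Pp unfolding c_def by (simp add: field_simps)
  have fPpos: "ff (real P) s \<ge> real P ^ s / 2"
    using fP hP by (rule half_bound) (use Pp in simp)
  have fPle: "ff (real P) s \<le> real P ^ s" by (rule ff_le) (use assms in auto)
  have fK: "ff (real K) s \<le> real K ^ s" "0 \<le> ff (real K) s" using ff_le ff_nonneg assms by auto
  have fK2: "ff (real K) s \<ge> real K ^ s * (1 - c / real K)"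
    unfolding c_def by (rule ff_ge) (use assms in auto)
  have hK: "0 \<le> 1 - c / real K" "c / real K \<ge> 0" using assms Pp c0 unfolding c_def by (auto simp: field_simps)
  have Ps: "real P ^ s > 0" "real K ^ s > 0" using Pp by auto
  have fs: "fact s > (0::real)" by simp
  have ffpos: "ff (real P) s > 0" using fPpos Ps by linarith
  have up: "Uval s K P \<le> M * (real P ^ s / ff (real P) s)"
  proof -
    have "Uval s K P \<le> (real K ^ s) ^ 2 / (fact s * ff (real P) s)"
      unfolding Uval_ff
      by (rule divide_right_mono) (use fK fPpos Ps ffpos fs in \<open>auto intro: power_mono\<close>)
    also have "\<dots> = M * (real P ^ s / ff (real P) s)"
      unfolding M_def main_alt using ffpos Pp by (simp add: power2_eq_square field_simps)
    finally show ?thesis .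
  qed
  have r1: "real P ^ s / ff (real P) s - 1 \<le> 2 * c / real P"
  proof -
    have ffp: "ff (real P) s > 0" using fPpos Ps by linarith
    have "real P ^ s - ff (real P) s \<le> real P ^ s * (c / real P)" using fP by (simp add: algebra_simps)
    hence "(real P ^ s - ff (real P) s) / ff (real P) s \<le> real P ^ s * (c / real P) / (real P ^ s / 2)"
      using ffp fPpos Ps c0 Pp by (intro frac_le) auto
    also have "\<dots> = 2 * c / real P" using Ps by (simp add: field_simps)
    finally show ?thesis using ffp by (simp add: diff_divide_distrib)
  qed
  have A: "Uval s K P - M \<le> 2 * c * M * (1 / real K + 1 / real P)"
  proof -
    have "Uval s K P - M \<le> M * (real P ^ s / ff (real P) s - 1)" using up by (simp add: algebra_simps)
    also have "\<dots> \<le> M * (2 * c / real P)" by (rule mult_left_mono[OF r1 M0])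
    also have "\<dots> \<le> 2 * c * M * (1 / real K + 1 / real P)" using M0 c0 Pp
      by (simp add: field_simps)
    finally show ?thesis .
  qed
  have lo: "M * (1 - c / real K) ^ 2 \<le> Uval s K P"
  proof -
    have "M * (1 - c / real K) ^ 2 = (real K ^ s * (1 - c / real K)) ^ 2 / (fact s * real P ^ s)"
      unfolding M_def main_alt by (simp add: power2_eq_square field_simps)
    also have "\<dots> \<le> ff (real K) s ^ 2 / (fact s * ff (real P) s)"
    proof (rule frac_le)
      show "0 \<le> ff (real K) s ^ 2" by simp
      show "(real K ^ s * (1 - c / real K)) ^ 2 \<le> ff (real K) s ^ 2"
        by (rule power_mono[OF fK2]) (use hK Ps in simp)
      show "0 < fact s * ff (real P) s" using fPpos Ps fs by (smt (verit) mult_pos_pos divide_pos_pos)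
      show "fact s * ff (real P) s \<le> fact s * real P ^ s" using fPle fs by simp
    qed
    finally show ?thesis unfolding Uval_ff .
  qed
  have B: "M - Uval s K P \<le> 2 * c * M * (1 / real K + 1 / real P)"
  proof -
    have "M - Uval s K P \<le> M * (1 - (1 - c / real K) ^ 2)" using lo by (simp add: algebra_simps)
    also have "\<dots> \<le> M * (2 * (c / real K))"
      by (rule mult_left_mono) (use M0 hK in \<open>auto simp: power2_eq_square algebra_simps\<close>)
    also have "\<dots> \<le> 2 * c * M * (1 / real K + 1 / real P)" using M0 c0 Pp
      by (simp add: field_simps)
    finally show ?thesis .
  qed
  show ?thesis using A B unfolding M_def c_def by linarith
qed




lemma pointwise:
  fixes q U M x k p L nn c b \<delta> :: real
  assumes qU: "q \<le> U" and Uq: "U * (1 - k^2/(p-k+1)) \<le> q" and U2: "U \<le> 2*M"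
    and UM: "\<bar>U - M\<bar> \<le> 2*c*M*(1/k+1/p)" and xd: "x = k^2/p" and k1: "k \<ge> 1" and p0: "p > 0"
    and xL: "x*L \<le> \<delta>" "x*L \<le> 1/2" and L1: "L \<ge> 1" and cK: "c*(L/k) \<le> c*\<delta>" and Lp: "L/p \<le> \<delta>"
    and nM: "nn*M \<le> b*L" and nn: "nn \<ge> 0" and M0: "M \<ge> 0" and c0: "c \<ge> 0" and b0: "b \<ge> 0" and U0: "U \<ge> 0"
  shows "nn*\<bar>q - M\<bar> \<le> 4*b*\<delta> + 4*c*b*\<delta>"
proof -
  have x0: "x \<ge> 0" using xd p0 by simp
  have "x * 1 \<le> x * L" by (rule mult_left_mono[OF L1 x0])
  hence x12: "x \<le> 1/2" using xL(2) by simp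
  have kk: "k \<le> k^2" using k1 by (simp add: power2_eq_square)
  have "k^2 = x * p" using xd p0 by simp
  also have "\<dots> \<le> (1/2) * p" by (rule mult_right_mono[OF x12]) (use p0 in simp)
  finally have kp: "k \<le> p/2" using kk by simp
  have den: "p - k + 1 \<ge> p/2" using kp by simp
  have t: "k^2/(p-k+1) \<le> 2*x"
  proof -
    have "k^2/(p-k+1) \<le> k^2/(p/2)" using den p0 by (intro divide_left_mono) auto
    also have "k^2/(p/2) = 2*x" using xd p0 by simp
    finally show ?thesis .
  qed
  have "U - q \<le> U * (k^2/(p-k+1))" using Uq by (simp add: algebra_simps)
  also have "\<dots> \<le> U * (2*x)" by (rule mult_left_mono[OF t U0])
  finally have qU2: "\<bar>q - U\<bar> \<le> 2*U*x" using qU by simp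
  have "\<bar>q - M\<bar> \<le> 2*U*x + 2*c*M*(1/k+1/p)" using qU2 UM by linarith
  also have "\<dots> \<le> 4*M*x + 2*c*M*(1/k+1/p)" using U2 x0 by (simp add: mult_right_mono)
  finally have main: "\<bar>q - M\<bar> \<le> 4*M*x + 2*c*M*(1/k+1/p)" .
  have "nn*\<bar>q - M\<bar> \<le> nn*(4*M*x + 2*c*M*(1/k+1/p))" by (rule mult_left_mono[OF main nn])
  also have "\<dots> = 4*(nn*M)*x + 2*c*(nn*M)*(1/k+1/p)" by (simp add: algebra_simps)
  also have "\<dots> \<le> 4*(b*L)*x + 2*c*(b*L)*(1/k+1/p)"
  proof -
    have "(nn*M)*x \<le> (b*L)*x" using nM x0 by (rule mult_right_mono)
    moreover have "c*(nn*M)*(1/k+1/p) \<le> c*(b*L)*(1/k+1/p)"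
      using nM c0 k1 p0 by (intro mult_right_mono mult_left_mono) auto
    ultimately show ?thesis by linarith
  qed
  also have "\<dots> = 4*b*(x*L) + 2*b*(c*(L/k)) + 2*c*b*(L/p)" by (simp add: algebra_simps)
  also have "\<dots> \<le> 4*b*\<delta> + 2*b*(c*\<delta>) + 2*c*b*\<delta>"
  proof -
    have "4*b*(x*L) \<le> 4*b*\<delta>" using xL(1) b0 by (intro mult_left_mono) auto
    moreover have "2*b*(c*(L/k)) \<le> 2*b*(c*\<delta>)" by (rule mult_left_mono[OF cK]) (use b0 in simp)
    moreover have "2*c*b*(L/p) \<le> 2*c*b*\<delta>" using Lp b0 c0 by (intro mult_left_mono) auto
    ultimately show ?thesis by linarith
  qed
  also have "\<dots> = 4*b*\<delta> + 4*c*b*\<delta>" by (simp add: algebra_simps)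
  finally show ?thesis .
qed




lemma tend0:
  fixes f :: "'a \<Rightarrow> real"
  assumes "\<And>\<epsilon>. \<epsilon> > 0 \<Longrightarrow> eventually (\<lambda>n. \<bar>f n\<bar> \<le> \<epsilon>) F"
  shows "(f \<longlongrightarrow> 0) F"
proof (rule order_tendstoI)
  fix a :: real assume "a < 0"
  have "eventually (\<lambda>n. \<bar>f n\<bar> \<le> -a/2) F" by (rule assms) (use \<open>a < 0\<close> in simp)
  thus "eventually (\<lambda>n. a < f n) F" by eventually_elim (use \<open>a < 0\<close> in linarith)
next
  fix a :: real assume "0 < a"
  have "eventually (\<lambda>n. \<bar>f n\<bar> \<le> a/2) F" by (rule assms) (use \<open>0 < a\<close> in simp)
  thus "eventually (\<lambda>n. f n < a) F" by eventually_elim (use \<open>0 < a\<close> in linarith)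
qed

lemma ev_small:
  fixes g :: "nat \<Rightarrow> real"
  assumes "(g \<longlongrightarrow> 0) sequentially" "C > 0"
  shows "eventually (\<lambda>n. g n < C) sequentially"
  using order_tendstoD(2)[OF assms] .

lemma finish:
  fixes s :: nat and K P :: "nat \<Rightarrow> nat" and a b c0 :: real
  assumes s1: "s \<ge> 1" and KP: "\<forall>n. s \<le> K n \<and> K n \<le> P n" and c0: "c0 > 0"
    and Pn: "\<forall>\<^sub>F n in sequentially. c0 * real n \<le> real (P n)"
    and a0: "a > 0"
    and B: "\<forall>\<^sub>F n in sequentially. a * ln (real n) \<le> real n * main_term s (K n) (P n)
                 \<and> real n * main_term s (K n) (P n) \<le> b * ln (real n)"
  shows "(\<lambda>n. edge_prob s (K n) (P n)) \<sim>[sequentially] (\<lambda>n. main_term s (K n) (P n))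
         \<and> (\<lambda>n. \<bar>edge_prob s (K n) (P n) - main_term s (K n) (P n)\<bar>) \<in> o(\<lambda>n. 1 / real n)"
proof -
  define q where "q n = edge_prob s (K n) (P n)" for n
  define M where "M n = main_term s (K n) (P n)" for n
  define U where "U n = Uval s (K n) (P n)" for n
  define k where "k n = real (K n)" for n
  define p where "p n = real (P n)" for n
  define L where "L n = ln (real n)" for n
  define c where "c = real s * (real s - 1)"
  have c0': "c \<ge> 0" unfolding c_def using s1 by simp
  have K1: "k n \<ge> 1" "p n \<ge> 1" "k n \<le> p n" for n using KP s1 unfolding k_def p_def
    by (metis le_trans of_nat_1 of_nat_le_iff)+
  have M0: "M n \<ge> 0" for n unfolding M_def main_term_def by simp
  have U0: "U n \<ge> 0" for n unfolding U_def Uval_def by simp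
  have Mk: "k n ^ (2*s) = fact s * M n * p n ^ s" for n
    using K1(2)[of n] unfolding M_def main_term_def k_def p_def by simp
  have Mx: "(k n ^ 2 / p n) ^ s = fact s * M n" for n
    using K1(2)[of n] unfolding M_def main_term_def k_def p_def
    by (simp add: power_divide power_mult[symmetric])
  have ev_L1: "eventually (\<lambda>n. L n \<ge> 1) sequentially" unfolding L_def by real_asymp
  have ev_n1: "eventually (\<lambda>n. real n \<ge> 1) sequentially" by real_asymp
  have ba: "b \<ge> a"
  proof -
    from eventually_conj[OF B ev_L1] obtain N where N: "\<forall>n\<ge>N. (a * ln (real n) \<le> real n * M n \<and> real n * M n \<le> b * ln (real n)) \<and> L n \<ge> 1"
      unfolding M_def eventually_sequentially by blast
    hence hN: "(a * ln (real N) \<le> real N * M N \<and> real N * M N \<le> b * ln (real N)) \<and> L N \<ge> 1" by blast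
    hence "a * L N \<le> b * L N" "L N \<ge> 1" unfolding L_def by linarith+
    hence "(b - a) * L N \<ge> 0" by (simp add: algebra_simps)
    thus ?thesis using \<open>L N \<ge> 1\<close> by (simp add: zero_le_mult_iff)
  qed
  have b0: "b > 0" using ba a0 by simp
  have nMb: "eventually (\<lambda>n. real n * M n \<le> b * L n \<and> a * L n \<le> real n * M n) sequentially"
    using B unfolding M_def L_def by eventually_elim auto
  have ev_xL: "eventually (\<lambda>n. (k n ^ 2 / p n) * L n \<le> \<epsilon>) sequentially" if e: "\<epsilon> > 0" for \<epsilon>
  proof -
    have lim: "(\<lambda>n. ln (real n) ^ (s+1) / real n) \<longlonglongrightarrow> 0" by real_asymp
    have "eventually (\<lambda>n. ln (real n) ^ (s+1) / real n < \<epsilon> ^ s / (fact s * b)) sequentially"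
      by (rule ev_small[OF lim]) (use e b0 in simp)
    thus ?thesis using nMb ev_L1 ev_n1
    proof eventually_elim
      case (elim n)
      define y where "y = (k n ^ 2 / p n) * L n"
      have y0: "y \<ge> 0" unfolding y_def using elim K1[of n] by simp
      have Mb: "M n \<le> b * L n / real n" using elim by (simp add: field_simps)
      have "y ^ s = (k n ^ 2 / p n) ^ s * L n ^ s" unfolding y_def by (rule power_mult_distrib)
      also have "\<dots> = fact s * M n * L n ^ s" by (simp only: Mx)
      also have "\<dots> \<le> fact s * (b * L n / real n) * L n ^ s"
        using Mb elim by (intro mult_right_mono mult_left_mono) auto
      also have "\<dots> = (fact s * b) * (L n ^ (s+1) / real n)" by (simp add: algebra_simps)
      also have "\<dots> < (fact s * b) * (\<epsilon> ^ s / (fact s * b))"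
        using elim(1) b0 unfolding L_def by (intro mult_strict_left_mono) auto
      also have "\<dots> = \<epsilon> ^ s" using b0 by simp
      finally have "y < \<epsilon>" using e by (intro power_less_imp_less_base[of y s]) auto
      thus ?case unfolding y_def by simp
    qed
  qed
  have ev_Lp: "eventually (\<lambda>n. L n / p n \<le> \<epsilon>) sequentially" if e: "\<epsilon> > 0" for \<epsilon>
  proof -
    have lim: "(\<lambda>n. ln (real n) / real n) \<longlonglongrightarrow> 0" by real_asymp
    have "eventually (\<lambda>n. ln (real n) / real n < \<epsilon> * c0) sequentially"
      by (rule ev_small[OF lim]) (use e c0 in simp)
    thus ?thesis using Pn ev_L1 ev_n1
    proof eventually_elim
      case (elim n)
      have "L n / p n \<le> L n / (c0 * real n)"
      proof (rule divide_left_mono)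
        show "0 \<le> L n" using elim by simp
        show "c0 * real n \<le> p n" using elim unfolding p_def by simp
        show "0 < p n * (c0 * real n)" using elim c0 K1[of n] by simp
      qed
      also have "\<dots> = (ln (real n) / real n) / c0" unfolding L_def by simp
      also have "\<dots> \<le> \<epsilon>" unfolding pos_divide_le_eq[OF c0] using elim(1) by linarith
      finally show ?case .
    qed
  qed
  have ev_Lk: "eventually (\<lambda>n. L n / k n \<le> \<epsilon>) sequentially" if e: "\<epsilon> > 0" and s2: "s \<ge> 2" for \<epsilon>
  proof -
    define C where "C = fact s * a * c0 ^ s"
    have C0: "C > 0" unfolding C_def using a0 c0 by simp
    have lim: "(\<lambda>n. ln (real n) ^ (2*s-1) / real n) \<longlonglongrightarrow> 0" by real_asymp
    have "eventually (\<lambda>n. ln (real n) ^ (2*s-1) / real n < C * \<epsilon> ^ (2*s)) sequentially"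
      by (rule ev_small[OF lim]) (use e C0 in simp)
    thus ?thesis using nMb ev_L1 ev_n1 Pn
    proof eventually_elim
      case (elim n)
      have n1: "real n \<ge> 1" and L1: "L n \<ge> 1" using elim by auto
      have ns: "real n ^ s \<ge> real n * real n"
      proof -
        have "real n ^ s = real n ^ (2 + (s - 2))" using s2 by (metis le_add_diff_inverse)
        also have "\<dots> = real n ^ 2 * real n ^ (s - 2)" by (rule power_add)
        finally have "real n ^ s = real n ^ 2 * real n ^ (s - 2)" .
        moreover have "real n ^ (s - 2) \<ge> 1" using n1 by simp
        ultimately show ?thesis using n1 by (simp add: power2_eq_square)
      qed
      have kb: "C * L n * real n \<le> k n ^ (2*s)"
      proof -
        have "C * L n * real n = fact s * (a * L n / real n) * (c0 ^ s * (real n * real n))"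
          unfolding C_def using n1 by (simp add: field_simps)
        also have "\<dots> \<le> fact s * M n * (c0 ^ s * real n ^ s)"
        proof -
          have h1: "a * L n / real n \<le> M n" using elim n1 by (simp add: field_simps)
          have h2: "c0 ^ s * (real n * real n) \<le> c0 ^ s * real n ^ s" using ns c0 by simp
          have h3: "fact s * (a * L n / real n) \<le> fact s * M n" by (rule mult_left_mono[OF h1]) simp
          show ?thesis by (rule mult_mono[OF h3 h2]) (use c0 M0 in auto)
        qed
        also have "\<dots> = fact s * M n * (c0 * real n) ^ s" by (simp add: power_mult_distrib)
        also have "\<dots> \<le> fact s * M n * p n ^ s"
          using elim c0 M0 unfolding p_def by (intro mult_left_mono power_mono) auto
        finally show ?thesis using Mk by simp
      qed
      define y where "y = L n / k n"
      have y0: "y \<ge> 0" unfolding y_def using L1 K1[of n] by simp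
      have kpos: "k n ^ (2*s) > 0" using K1[of n] by simp
      have "y ^ (2*s) = L n ^ (2*s) / k n ^ (2*s)" unfolding y_def by (simp add: power_divide)
      also have "\<dots> \<le> L n ^ (2*s) / (C * L n * real n)"
        using kb kpos C0 L1 n1 by (intro divide_left_mono) auto
      also have "\<dots> = (L n ^ (2*s-1) / real n) / C"
      proof -
        have "L n ^ (2*s) = L n ^ Suc (2*s-1)" using s2 by (metis Suc_diff_1 nat_0_less_mult_iff zero_less_numeral le_trans less_le_trans zero_less_Suc one_le_numeral not_less_eq_eq Suc_1)
        hence "L n ^ (2*s) = L n * L n ^ (2*s-1)" by (simp only: power_Suc)
        thus ?thesis using L1 by simp
      qed
      also have "\<dots> < \<epsilon> ^ (2*s)" unfolding pos_divide_less_eq[OF C0] using elim(1) unfolding L_def by (simp add: mult.commute)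
      finally have "y < \<epsilon>" using e by (intro power_less_imp_less_base[of y "2*s"]) auto
      thus ?case unfolding y_def by simp
    qed
  qed
  have ev_pc: "eventually (\<lambda>n. c \<le> p n / 2) sequentially"
  proof -
    have "eventually (\<lambda>n. 2*c/c0 \<le> real n) sequentially" by real_asymp
    thus ?thesis using Pn
    proof eventually_elim
      case (elim n)
      have "2*c = c0 * (2*c/c0)" using c0 by simp
      also have "\<dots> \<le> c0 * real n" using elim c0 by (intro mult_left_mono) auto
      finally show ?case using elim unfolding p_def by simp
    qed
  qed
  have ev_ck: "eventually (\<lambda>n. c \<le> k n \<and> c * (L n / k n) \<le> c * \<delta>) sequentially" if d: "\<delta> > 0" for \<delta>
  proof (cases "s = 1")
    case True
    hence "c = 0" unfolding c_def by simp
    have "\<forall>n. 0 \<le> k n" using K1 by (meson order_trans zero_le_one)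
    thus ?thesis using \<open>c = 0\<close> by simp
  next
    case False
    hence s2: "s \<ge> 2" using s1 by simp
    have "eventually (\<lambda>n. L n \<ge> c) sequentially" unfolding L_def by real_asymp
    moreover have "eventually (\<lambda>n. L n / k n \<le> min \<delta> 1) sequentially" by (rule ev_Lk) (use d s2 in auto)
    ultimately show ?thesis
    proof eventually_elim
      case (elim n)
      have kp: "k n > 0" using K1[of n] by simp
      have "L n \<le> k n" using elim kp by (simp add: divide_le_eq)
      moreover have "c * (L n / k n) \<le> c * \<delta>" using elim c0' by (intro mult_left_mono) auto
      ultimately show ?case using elim by simp
    qed
  qed
  have ev_main: "eventually (\<lambda>n. real n * \<bar>q n - M n\<bar> \<le> \<epsilon>) sequentially" if e: "\<epsilon> > 0" for \<epsilon>
  proof -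
    define \<delta> where "\<delta> = \<epsilon> / (4 * b * (1 + c))"
    have d0: "\<delta> > 0" unfolding \<delta>_def using e b0 c0' by simp
    have "4*b*\<delta> + 4*c*b*\<delta> = (4*b*(1+c))*\<delta>" by (simp add: algebra_simps)
    also have "\<dots> = \<epsilon>" unfolding \<delta>_def using b0 c0' by simp
    finally have de: "4*b*\<delta> + 4*c*b*\<delta> = \<epsilon>" .
    have "eventually (\<lambda>n. ((k n ^ 2 / p n) * L n \<le> \<delta> \<and> (k n ^ 2 / p n) * L n \<le> 1/2) \<and> L n \<ge> 1
            \<and> (c \<le> k n \<and> c * (L n / k n) \<le> c * \<delta>) \<and> L n / p n \<le> \<delta>
            \<and> (real n * M n \<le> b * L n \<and> a * L n \<le> real n * M n) \<and> c \<le> p n / 2 \<and> real n \<ge> 1) sequentially"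
      by (intro eventually_conj ev_xL ev_L1 ev_ck ev_Lp nMb ev_pc ev_n1 d0) simp
    thus ?thesis
    proof eventually_elim
      case (elim n)
      have KPn: "s \<le> K n" "K n \<le> P n" using KP by auto
      hence KPn2: "0 < K n" "0 < P n" using s1 by linarith+
      note KPn = KPn KPn2
      have qU: "q n \<le> U n" unfolding q_def U_def using EP_upper KPn by simp
      have Uq: "U n * (1 - k n ^ 2 / (p n - k n + 1)) \<le> q n"
        using EP_lower[of s "K n" "K n" "P n"] KPn unfolding q_def U_def Uval_def k_def p_def by simp
      have U2: "U n \<le> 2 * M n" unfolding U_def M_def
        by (rule UM1) (use KPn elim in \<open>auto simp: c_def p_def\<close>)
      have UM: "\<bar>U n - M n\<bar> \<le> 2*c*M n*(1/k n+1/p n)" unfolding U_def M_def c_def k_def p_def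
        by (rule UM2) (use KPn elim in \<open>auto simp: c_def p_def k_def\<close>)
      have "real n * \<bar>q n - M n\<bar> \<le> 4*b*\<delta> + 4*c*b*\<delta>"
        by (rule pointwise[where L="L n" and nn="real n" and \<delta>=\<delta> and b=b, OF qU Uq U2 UM refl]) (use elim K1[of n] M0[of n] U0[of n] c0' b0 in auto)
      thus ?case using de by simp
    qed
  qed
  have lim: "(\<lambda>n. real n * \<bar>q n - M n\<bar>) \<longlonglongrightarrow> 0"
    by (rule tend0) (use ev_main in simp)
  have o1: "(\<lambda>n. \<bar>q n - M n\<bar>) \<in> o(\<lambda>n. 1 / real n)"
  proof (rule smalloI_tendsto)
    have "(\<lambda>n. \<bar>q n - M n\<bar> / (1 / real n)) = (\<lambda>n. real n * \<bar>q n - M n\<bar>)" by (rule ext) simp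
    thus "(\<lambda>n. \<bar>q n - M n\<bar> / (1 / real n)) \<longlonglongrightarrow> 0" using lim by simp
    show "eventually (\<lambda>n. 1 / real n \<noteq> 0) sequentially" using ev_n1 by eventually_elim simp
  qed
  have ev_aL: "eventually (\<lambda>n. L n \<ge> 1 / a) sequentially" unfolding L_def by real_asymp
  have ev_nM: "eventually (\<lambda>n. real n * M n \<ge> 1) sequentially"
    using nMb ev_aL
  proof eventually_elim
    case (elim n)
    have "1 = a * (1/a)" using a0 by simp
    also have "\<dots> \<le> a * L n" using elim a0 by (intro mult_left_mono) auto
    finally show ?case using elim by linarith
  qed
  have eq: "(\<lambda>n. q n) \<sim>[sequentially] (\<lambda>n. M n)"
    unfolding asymp_equiv_altdef
  proof (rule smalloI_tendsto)
    show "eventually (\<lambda>n. M n \<noteq> 0) sequentially" using ev_nM by eventually_elim auto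
    show "(\<lambda>n. (q n - M n) / M n) \<longlonglongrightarrow> 0"
    proof (rule tend0)
      fix \<epsilon> :: real assume "\<epsilon> > 0"
      with ev_main have "eventually (\<lambda>n. real n * \<bar>q n - M n\<bar> \<le> \<epsilon>) sequentially" by simp
      thus "eventually (\<lambda>n. \<bar>(q n - M n) / M n\<bar> \<le> \<epsilon>) sequentially" using ev_nM ev_n1
      proof eventually_elim
        case (elim n)
        have "M n \<noteq> 0" using elim by auto
        hence Mp: "M n > 0" using M0[of n] by linarith
        have "\<bar>q n - M n\<bar> = 1 * \<bar>q n - M n\<bar>" by simp
        also have "\<dots> \<le> (real n * M n) * \<bar>q n - M n\<bar>" using elim by (intro mult_right_mono) auto
        finally have "\<bar>q n - M n\<bar> / M n \<le> real n * \<bar>q n - M n\<bar>"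
          using Mp by (simp add: pos_divide_le_eq algebra_simps)
        thus ?case using Mp elim by simp
      qed
    qed
  qed
  show ?thesis using eq o1 unfolding q_def M_def by simp
qed




lemma ff_ge3:
  assumes "1 \<le> s" "real s \<le> x"
  shows "(x / real s) ^ s * fact s \<le> ff x s"
proof -
  have fs: "ff (real s) s = fact s" using ff_choose[of s s] by simp
  have "(x / real s) ^ s * fact s = (\<Prod>i<s. (x / real s) * (real s - real i))"
    unfolding prod.distrib fs[symmetric] ff_def by simp
  also have "\<dots> \<le> (\<Prod>i<s. x - real i)"
  proof (rule prod_mono)
    fix i assume "i \<in> {..<s}"
    hence i: "real i \<le> real s" by simp
    have sp: "real s > 0" using assms by simp
    have x0: "x \<ge> 0" using assms by simp
    have "0 \<le> (x / real s) * (real s - real i)" using i x0 sp by simp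
    moreover have "(x / real s) * (real s - real i) \<le> x - real i"
    proof -
      have "real i * real s \<le> real i * x" using assms by (intro mult_left_mono) auto
      hence "real i \<le> x * real i / real s" using sp by (simp add: field_simps)
      moreover have "(x / real s) * (real s - real i) = x - x * real i / real s" using sp by (simp add: field_simps)
      ultimately show ?thesis by linarith
    qed
    ultimately show "0 \<le> (x / real s) * (real s - real i) \<and> (x / real s) * (real s - real i) \<le> x - real i" by simp
  qed
  finally show ?thesis unfolding ff_def .
qed

lemma UM3:
  assumes "1 \<le> s" "s \<le> K" "K \<le> P"
  shows "main_term s K P * (fact s ^ 2 / real s ^ (2*s)) \<le> Uval s K P"
proof -
  have Pp: "real P > 0" "real K > 0" "real s > 0" using assms by auto
  have fK: "(real K / real s) ^ s * fact s \<le> ff (real K) s" by (rule ff_ge3) (use assms in auto)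
  have fP: "ff (real P) s \<le> real P ^ s" "0 < ff (real P) s"
  proof -
    show "ff (real P) s \<le> real P ^ s" by (rule ff_le) (use assms in auto)
    have "(real P / real s) ^ s * fact s \<le> ff (real P) s" by (rule ff_ge3) (use assms in auto)
    moreover have "(real P / real s) ^ s * fact s > 0" using Pp by simp
    ultimately show "0 < ff (real P) s" by linarith
  qed
  have "main_term s K P * (fact s ^ 2 / real s ^ (2*s)) = ((real K / real s) ^ s * fact s) ^ 2 / (fact s * real P ^ s)"
    unfolding main_alt using Pp by (simp add: power2_eq_square power_divide power_mult field_simps)
  also have "\<dots> \<le> ff (real K) s ^ 2 / (fact s * ff (real P) s)"
  proof (rule frac_le)
    show "0 \<le> ff (real K) s ^ 2" by simp
    show "((real K / real s) ^ s * fact s) ^ 2 \<le> ff (real K) s ^ 2"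
      by (rule power_mono[OF fK]) (use Pp in simp)
    show "0 < fact s * ff (real P) s" using fP by simp
    show "fact s * ff (real P) s \<le> fact s * real P ^ s" using fP by simp
  qed
  finally show ?thesis unfolding Uval_ff .
qed

lemma DL:
  fixes \<epsilon> :: real
  assumes s1: "1 \<le> s" and KP: "s \<le> K" "K \<le> P" and e: "0 < \<epsilon>" "\<epsilon> \<le> 1/4"
    and big: "\<epsilon> * real P \<le> real K ^ 2" and r: "2 * (real s + 1) \<le> sqrt (\<epsilon> * real P)"
  shows "(\<epsilon>/4) ^ s / (2 * fact s) \<le> edge_prob s K P"
proof -
  define r where "r = sqrt (\<epsilon> * real P)"
  define a where "a = nat \<lfloor>r\<rfloor>"
  have r0: "r \<ge> 0" unfolding r_def using e by simp
  have rr: "r^2 = \<epsilon> * real P" unfolding r_def using e by simp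
  have ar: "real a \<le> r" "r < real a + 1" unfolding a_def using r0 by linarith+
  have rs: "2 * (real s + 1) \<le> r" using r unfolding r_def .
  have a2: "real a ^ 2 \<le> \<epsilon> * real P" using ar r0 rr by (metis of_nat_0_le_iff power_mono)
  have aK: "a \<le> K"
  proof -
    have "real a ^ 2 \<le> real K ^ 2" using a2 big by linarith
    hence "real a \<le> real K" by (rule power2_le_imp_le) simp
    thus ?thesis by simp
  qed
  have h1: "r - 1 - real s \<ge> r/2" using rs by simp
  have as: "real a - real s \<ge> r / 2" using ar(2) h1 by simp
  hence sa: "s \<le> a" using rs r0 by linarith
  have Pp: "real P > 0" using KP s1 by simp
  have a1: "real a \<ge> 1" using sa s1 by linarith
  have f1: "(\<epsilon>/4) ^ s / fact s \<le> real (a choose s) ^ 2 / real (P choose s)"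
  proof -
    have ca: "real (a choose s) = ff (real a) s / fact s" using ff_choose[of s a] by (simp add: field_simps)
    have cP: "real (P choose s) = ff (real P) s / fact s" using ff_choose[of s P] by (simp add: field_simps)
    have fa: "(real a - real s) ^ s \<le> ff (real a) s" by (rule ff_ge2) (use sa in simp)
    have fP: "ff (real P) s \<le> real P ^ s" by (rule ff_le) (use KP in simp)
    have cPpos: "real (P choose s) > 0" using KP by simp
    have "(\<epsilon>/4) ^ s * real P ^ s = (\<epsilon> * real P / 4) ^ s" by (simp add: power_mult_distrib[symmetric])
    also have "\<dots> \<le> ((real a - real s) ^ 2) ^ s"
    proof (rule power_mono)
      have "(r/2)^2 \<le> (real a - real s) ^ 2" using as r0 by (intro power_mono) auto
      thus "\<epsilon> * real P / 4 \<le> (real a - real s) ^ 2" using rr by (simp add: power_divide)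
    qed (use e Pp in simp)
    also have "\<dots> = ((real a - real s) ^ s) ^ 2" by (simp add: power_mult[symmetric] mult.commute)
    also have "\<dots> \<le> ff (real a) s ^ 2" using fa as r0 by (intro power_mono) auto
    finally have h: "(\<epsilon>/4) ^ s * real P ^ s \<le> ff (real a) s ^ 2" .
    have "(\<epsilon>/4) ^ s / fact s = ((\<epsilon>/4) ^ s * real P ^ s) / (fact s * real P ^ s)" using Pp by simp
    also have "\<dots> \<le> ff (real a) s ^ 2 / (fact s * ff (real P) s)"
    proof (rule frac_le)
      show "0 \<le> ff (real a) s ^ 2" by simp
      have "ff (real P) s = fact s * real (P choose s)" using ff_choose[of s P] by simp
      thus "0 < fact s * ff (real P) s" using cPpos by simp
      show "fact s * ff (real P) s \<le> fact s * real P ^ s" using fP by simp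
    qed (rule h)
    also have "\<dots> = real (a choose s) ^ 2 / real (P choose s)"
      unfolding ca cP by (simp add: power2_eq_square field_simps)
    finally show ?thesis .
  qed
  have f2: "1/2 \<le> 1 - real a ^ 2 / (real P - real a + 1)"
  proof -
    have "real a \<le> real a ^ 2" using a1 by (simp add: power2_eq_square)
    have eP: "\<epsilon> * real P \<le> (1/4) * real P" using e Pp by (intro mult_right_mono) auto
    have a2P: "real a ^ 2 \<le> real P / 4" using a2 eP by simp
    hence "real a \<le> real P / 4" using \<open>real a \<le> real a ^ 2\<close> by linarith
    hence den: "real P - real a + 1 \<ge> real P / 2" by simp
    have "real a ^ 2 / (real P - real a + 1) \<le> (real P / 4) / (real P / 2)"
    proof (rule frac_le)
      show "real a ^ 2 \<le> real P / 4" by (rule a2P)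
    qed (use den Pp in auto)
    also have "\<dots> = 1/2" using Pp by simp
    finally show ?thesis by simp
  qed
  have "(\<epsilon>/4) ^ s / (2 * fact s) = ((\<epsilon>/4) ^ s / fact s) * (1/2)" by simp
  also have "\<dots> \<le> real (a choose s) ^ 2 / real (P choose s) * (1 - real a ^ 2 / (real P - real a + 1))"
    by (rule mult_mono[OF f1 f2]) (use e in auto)
  also have "\<dots> \<le> edge_prob s K P" by (rule EP_lower) (use sa aK KP in auto)
  finally show ?thesis .
qed




theorem lemma8:
  fixes s :: nat and K P :: "nat \<Rightarrow> nat"
  assumes "s \<ge> 1"
    and "\<forall>n. s \<le> K n \<and> K n \<le> P n"
    and "(\<lambda>n. real (P n)) \<in> \<Omega>(\<lambda>n. real n)"
  shows "((\<exists>\<gamma> :: nat \<Rightarrow> real. \<gamma> \<in> O(\<lambda>n. ln (ln (real n))) \<and>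
             (\<forall>\<^sub>F n in sequentially. main_term s (K n) (P n) = (ln (real n) + \<gamma> n) / real n))
          \<longrightarrow> (\<lambda>n. edge_prob s (K n) (P n)) \<sim>[sequentially] (\<lambda>n. main_term s (K n) (P n))
              \<and> (\<lambda>n. \<bar>edge_prob s (K n) (P n) - main_term s (K n) (P n)\<bar>) \<in> o(\<lambda>n. 1 / real n))
       \<and> ((\<exists>\<gamma> :: nat \<Rightarrow> real. \<gamma> \<in> O(\<lambda>n. ln (ln (real n))) \<and>
             (\<forall>\<^sub>F n in sequentially. edge_prob s (K n) (P n) = (ln (real n) + \<gamma> n) / real n))
          \<longrightarrow> (\<lambda>n. edge_prob s (K n) (P n)) \<sim>[sequentially] (\<lambda>n. main_term s (K n) (P n))
              \<and> (\<lambda>n. \<bar>edge_prob s (K n) (P n) - main_term s (K n) (P n)\<bar>) \<in> o(\<lambda>n. 1 / real n))"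
proof -
  note s1 = assms(1) and KP = assms(2)
  from assms(3) obtain c0 where c0: "c0 > 0"
    and Pn0: "eventually (\<lambda>n. norm (real (P n)) \<ge> c0 * norm (real n)) sequentially"
    by (elim landau_omega.bigE)
  have Pn: "eventually (\<lambda>n. c0 * real n \<le> real (P n)) sequentially" using Pn0 by simp
  have ev_n1: "eventually (\<lambda>n. real n \<ge> 1) sequentially" by real_asymp
  have gam: "eventually (\<lambda>n. (1/2) * ln (real n) \<le> ln (real n) + \<gamma> n \<and> ln (real n) + \<gamma> n \<le> 2 * ln (real n)) sequentially"
    if "\<gamma> \<in> O(\<lambda>n. ln (ln (real n)))" for \<gamma> :: "nat \<Rightarrow> real"
  proof -
    from that obtain C where "C > 0" and C: "eventually (\<lambda>n. norm (\<gamma> n) \<le> C * norm (ln (ln (real n)))) sequentially"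
      by (elim landau_o.bigE)
    have "eventually (\<lambda>n. C * \<bar>ln (ln (real n))\<bar> \<le> ln (real n) / 2) sequentially" by real_asymp
    thus ?thesis using C by eventually_elim auto
  qed
  show ?thesis
  proof (rule conjI; rule impI)
    assume "\<exists>\<gamma> :: nat \<Rightarrow> real. \<gamma> \<in> O(\<lambda>n. ln (ln (real n))) \<and>
             (\<forall>\<^sub>F n in sequentially. main_term s (K n) (P n) = (ln (real n) + \<gamma> n) / real n)"
    then obtain \<gamma> :: "nat \<Rightarrow> real" where g1: "\<gamma> \<in> O(\<lambda>n. ln (ln (real n)))"
      and g2: "\<forall>\<^sub>F n in sequentially. main_term s (K n) (P n) = (ln (real n) + \<gamma> n) / real n" by blast
    have B: "\<forall>\<^sub>F n in sequentially. (1/2) * ln (real n) \<le> real n * main_term s (K n) (P n)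
                 \<and> real n * main_term s (K n) (P n) \<le> 2 * ln (real n)"
      using gam[OF g1] g2 ev_n1 by eventually_elim auto
    show "(\<lambda>n. edge_prob s (K n) (P n)) \<sim>[sequentially] (\<lambda>n. main_term s (K n) (P n))
              \<and> (\<lambda>n. \<bar>edge_prob s (K n) (P n) - main_term s (K n) (P n)\<bar>) \<in> o(\<lambda>n. 1 / real n)"
      using finish[OF s1 KP c0 Pn _ B] by simp
  next
    assume "\<exists>\<gamma> :: nat \<Rightarrow> real. \<gamma> \<in> O(\<lambda>n. ln (ln (real n))) \<and>
             (\<forall>\<^sub>F n in sequentially. edge_prob s (K n) (P n) = (ln (real n) + \<gamma> n) / real n)"
    then obtain \<gamma> :: "nat \<Rightarrow> real" where g1: "\<gamma> \<in> O(\<lambda>n. ln (ln (real n)))"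
      and g2: "\<forall>\<^sub>F n in sequentially. edge_prob s (K n) (P n) = (ln (real n) + \<gamma> n) / real n" by blast
    define q where "q n = edge_prob s (K n) (P n)" for n
    define M where "M n = main_term s (K n) (P n)" for n
    define U where "U n = Uval s (K n) (P n)" for n
    define D :: real where "D = fact s ^ 2 / real s ^ (2*s)"
    have D0: "D > 0" unfolding D_def using s1 by simp
    have Bq: "\<forall>\<^sub>F n in sequentially. (1/2) * ln (real n) \<le> real n * q n \<and> real n * q n \<le> 2 * ln (real n)"
      using gam[OF g1] g2 ev_n1 unfolding q_def by eventually_elim auto
    define \<delta>0 :: real where "\<delta>0 = (1/4/4) ^ s / (2 * fact s)"
    have d0: "\<delta>0 > 0" unfolding \<delta>0_def by simp
    have ev_q: "eventually (\<lambda>n. q n < \<delta>0) sequentially"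
    proof -
      have lim: "(\<lambda>n. ln (real n) / real n) \<longlonglongrightarrow> 0" by real_asymp
      have "eventually (\<lambda>n. ln (real n) / real n < \<delta>0 / 2) sequentially"
        by (rule ev_small[OF lim]) (use d0 in simp)
      thus ?thesis using Bq ev_n1
      proof eventually_elim
        case (elim n)
        have "real n * q n \<le> 2 * ln (real n)" using elim by simp
        hence "q n \<le> 2 * (ln (real n) / real n)" using elim by (simp add: field_simps)
        moreover have "2 * (ln (real n) / real n) < \<delta>0" using elim(1) by linarith
        ultimately show ?case by linarith
      qed
    qed
    have ev_big: "eventually (\<lambda>n. 16 * (real s + 1)^2 / c0 \<le> real n) sequentially" by real_asymp
    have ev_pc: "eventually (\<lambda>n. 2 * (real s * (real s - 1)) / c0 \<le> real n) sequentially" by real_asymp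
    have B: "\<forall>\<^sub>F n in sequentially. (1/4) * ln (real n) \<le> real n * main_term s (K n) (P n)
                 \<and> real n * main_term s (K n) (P n) \<le> (4 / D) * ln (real n)"
      using ev_q ev_big ev_pc Pn Bq ev_n1
    proof eventually_elim
      case (elim n)
      have KPn: "s \<le> K n" "K n \<le> P n" using KP by auto
      hence KPn2: "0 < K n" "0 < P n" using s1 by linarith+
      have k1: "real (K n) \<ge> 1" using KPn2 by simp
      have pbig: "16 * (real s + 1)^2 \<le> real (P n)"
      proof -
        have "16 * (real s + 1)^2 = c0 * (16 * (real s + 1)^2 / c0)" using c0 by simp
        also have "\<dots> \<le> c0 * real n" using elim c0 by (intro mult_left_mono) auto
        finally show ?thesis using elim by linarith
      qed
      have pc: "real s * (real s - 1) \<le> real (P n) / 2"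
      proof -
        have "2 * (real s * (real s - 1)) = c0 * (2 * (real s * (real s - 1)) / c0)" using c0 by simp
        also have "\<dots> \<le> c0 * real n" using elim c0 by (intro mult_left_mono) auto
        finally show ?thesis using elim by linarith
      qed
      have qU: "q n \<le> U n" unfolding q_def U_def using EP_upper KPn by simp
      have U2: "U n \<le> 2 * M n" unfolding U_def M_def by (rule UM1) (use KPn KPn2 pc in auto)
      have DM: "M n * D \<le> U n" unfolding U_def M_def D_def by (rule UM3) (use KPn s1 in auto)
      have small: "real (K n) ^ 2 < real (P n) / 4"
      proof (rule ccontr)
        assume "\<not> ?thesis"
        hence big: "1/4 * real (P n) \<le> real (K n) ^ 2" by simp
        have "sqrt ((2 * (real s + 1))^2) \<le> sqrt (1/4 * real (P n))"
        proof (intro real_sqrt_le_mono)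
          have "(2 * (real s + 1))^2 = 4 * (real s + 1)^2" by (simp add: power2_eq_square algebra_simps)
          thus "(2 * (real s + 1))^2 \<le> 1/4 * real (P n)" using pbig by simp
        qed
        hence r: "2 * (real s + 1) \<le> sqrt (1/4 * real (P n))" by simp
        have "(1/4/4) ^ s / (2 * fact s) \<le> edge_prob s (K n) (P n)"
          by (rule DL[OF s1 KPn _ _ big r]) auto
        thus False using elim unfolding q_def \<delta>0_def by simp
      qed
      have Uq: "U n * (1 - real (K n) ^ 2 / (real (P n) - real (K n) + 1)) \<le> q n"
        using EP_lower[of s "K n" "K n" "P n"] KPn unfolding q_def U_def Uval_def by simp
      have t: "real (K n) ^ 2 / (real (P n) - real (K n) + 1) \<le> 1/2"
      proof -
        have "real (K n) \<le> real (K n) ^ 2" using k1 by (simp add: power2_eq_square)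
        hence den: "real (P n) - real (K n) + 1 \<ge> real (P n) / 2" using small by linarith
        have "real (K n) ^ 2 / (real (P n) - real (K n) + 1) \<le> (real (P n) / 4) / (real (P n) / 2)"
          by (rule frac_le) (use small den KPn2 in auto)
        also have "\<dots> = 1/2" using KPn2 by simp
        finally show ?thesis .
      qed
      have U0: "U n \<ge> 0" unfolding U_def Uval_def by simp
      have "U n * (1/2) \<le> U n * (1 - real (K n) ^ 2 / (real (P n) - real (K n) + 1))"
        using t U0 by (intro mult_left_mono) auto
      hence "U n * (1/2) \<le> q n" using Uq by linarith
      hence U2q: "U n \<le> 2 * q n" by simp
      have nn: "real n > 0" using elim by simp
      have lo: "(1/4) * ln (real n) \<le> real n * M n"
      proof -
        have "(1/2) * ln (real n) \<le> real n * q n" using elim by simp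
        also have "\<dots> \<le> real n * (2 * M n)" using qU U2 nn by (intro mult_left_mono) auto
        finally show ?thesis by simp
      qed
      have up: "real n * M n \<le> (4 / D) * ln (real n)"
      proof -
        have "M n \<le> 2 * q n / D" using DM U2q D0 by (simp add: field_simps)
        hence "real n * M n \<le> real n * (2 * q n / D)" using nn by (intro mult_left_mono) auto
        also have "\<dots> = 2 * (real n * q n) / D" by simp
        also have "\<dots> \<le> 2 * (2 * ln (real n)) / D" using elim D0 by (intro divide_right_mono) auto
        finally show ?thesis by simp
      qed
      show ?case using lo up unfolding M_def by simp
    qed
    show "(\<lambda>n. edge_prob s (K n) (P n)) \<sim>[sequentially] (\<lambda>n. main_term s (K n) (P n))
              \<and> (\<lambda>n. \<bar>edge_prob s (K n) (P n) - main_term s (K n) (P n)\<bar>) \<in> o(\<lambda>n. 1 / real n)"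
      using finish[OF s1 KP c0 Pn _ B] by simp
  qed
qed


end
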